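(* Let $\varphi\colon\Gamma\to K$ be a surjective homomorphism of discrete groups. Then for every $\mathbb{R}$-generated Banach $K$-module $V$, the restriction map $H^2_b(\varphi;V)\colon H^2_b(K;V)\to H^2_b(\Gamma;\varphi^{-1}V)$ is injective.
   Context: An $\mathbb{R}$-generated Banach $K$-module is one of the form $\ell^\infty(S,\mathbb{R})$ for a $K$-set $S$, with $(k\cdot f)(s)=f(k^{-1}s)$. $\varphi^{-1}V$ is $V$ with $\Gamma$ acting through $\varphi$, and the restriction map is induced by precomposition with $\varphi$ on bounded invariant cochains of the standard resolution. *)

theory Defs
  imports Complex_Main "HOL-Algebra.Group_Action"
begin

text \<open>Homogeneous (n+1)-tuples of group elements, represented as lists.\<close>
definition tuples :: "('g,'m) monoid_scheme \<Rightarrow> nat \<Rightarrow> 'g list set" where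
  "tuples G n = {xs. length xs = Suc n \<and> set xs \<subseteq> carrier G}"

definition face :: "nat \<Rightarrow> 'g list \<Rightarrow> 'g list" where
  "face i xs = take i xs @ drop (Suc i) xs"

text \<open>Cochains with values in l^infty(S,R) are functions 'g list => 's => real.
  Homogeneous coboundary operator from degree n to degree n+1.\<close>
definition cobdry :: "nat \<Rightarrow> ('g list \<Rightarrow> 's \<Rightarrow> real) \<Rightarrow> 'g list \<Rightarrow> 's \<Rightarrow> real" where
  "cobdry n f = (\<lambda>xs s. \<Sum>i\<le>Suc n. (-1) ^ i * f (face i xs) s)"

text \<open>Bounded G-invariant n-cochains of the standard resolution with coefficients
  l^infty(S,R), where (g.f)(s) = f(g^{-1} s).\<close>
definition binv_cochains ::
  "('g,'m) monoid_scheme \<Rightarrow> 's set \<Rightarrow> ('g \<Rightarrow> 's \<Rightarrow> 's) \<Rightarrow> nat \<Rightarrow> ('g list \<Rightarrow> 's \<Rightarrow> real) set" where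
  "binv_cochains G S act n =
     {f. (\<exists>C. \<forall>xs\<in>tuples G n. \<forall>s\<in>S. \<bar>f xs s\<bar> \<le> C) \<and>
         (\<forall>g\<in>carrier G. \<forall>xs\<in>tuples G n. \<forall>s\<in>S.
             f (map (\<lambda>x. g \<otimes>\<^bsub>G\<^esub> x) xs) s = f xs (act (inv\<^bsub>G\<^esub> g) s))}"

definition bcocycles ::
  "('g,'m) monoid_scheme \<Rightarrow> 's set \<Rightarrow> ('g \<Rightarrow> 's \<Rightarrow> 's) \<Rightarrow> nat \<Rightarrow> ('g list \<Rightarrow> 's \<Rightarrow> real) set" where
  "bcocycles G S act n =
     {f \<in> binv_cochains G S act n. \<forall>xs\<in>tuples G (Suc n). \<forall>s\<in>S. cobdry n f xs s = 0}"

text \<open>Coboundaries in degree n+1 (equality in l^infty(S) means equality on S).\<close>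
definition bcoboundaries ::
  "('g,'m) monoid_scheme \<Rightarrow> 's set \<Rightarrow> ('g \<Rightarrow> 's \<Rightarrow> 's) \<Rightarrow> nat \<Rightarrow> ('g list \<Rightarrow> 's \<Rightarrow> real) set" where
  "bcoboundaries G S act n =
     {f. \<exists>b\<in>binv_cochains G S act n. \<forall>xs\<in>tuples G (Suc n). \<forall>s\<in>S. f xs s = cobdry n b xs s}"

definition cohrel ::
  "('g,'m) monoid_scheme \<Rightarrow> 's set \<Rightarrow> ('g \<Rightarrow> 's \<Rightarrow> 's) \<Rightarrow> nat \<Rightarrow> (('g list \<Rightarrow> 's \<Rightarrow> real) \<times> ('g list \<Rightarrow> 's \<Rightarrow> real)) set" where
  "cohrel G S act n =
     {(f, h). f \<in> bcocycles G S act (Suc n) \<and> h \<in> bcocycles G S act (Suc n) \<and>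
              (\<lambda>xs s. f xs s - h xs s) \<in> bcoboundaries G S act n}"

text \<open>Bounded cohomology H^{n+1}_b(G; l^infty(S,R)) as a set of classes.\<close>
definition Hb ::
  "('g,'m) monoid_scheme \<Rightarrow> 's set \<Rightarrow> ('g \<Rightarrow> 's \<Rightarrow> 's) \<Rightarrow> nat \<Rightarrow> ('g list \<Rightarrow> 's \<Rightarrow> real) set set" where
  "Hb G S act n = bcocycles G S act (Suc n) // cohrel G S act n"

definition res :: "('a \<Rightarrow> 'b) \<Rightarrow> ('b list \<Rightarrow> 's \<Rightarrow> real) \<Rightarrow> 'a list \<Rightarrow> 's \<Rightarrow> real" where
  "res \<phi> c = (\<lambda>xs. c (map \<phi> xs))"

text \<open>Induced map H^{n+1}_b(K; V) -> H^{n+1}_b(Gamma; phi^{-1} V) on classes.\<close>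
definition Hres ::
  "('a,'m) monoid_scheme \<Rightarrow> 's set \<Rightarrow> ('b \<Rightarrow> 's \<Rightarrow> 's) \<Rightarrow> ('a \<Rightarrow> 'b) \<Rightarrow> nat \<Rightarrow>
   ('b list \<Rightarrow> 's \<Rightarrow> real) set \<Rightarrow> ('a list \<Rightarrow> 's \<Rightarrow> real) set" where
  "Hres \<Gamma> S act \<phi> n C = (\<Union>c\<in>C. cohrel \<Gamma> S (\<lambda>\<gamma>. act (\<phi> \<gamma>)) n `` {res \<phi> c})"

end

theory Submission
  imports Defs
begin

lemma cob1: "cobdry 1 b [x,y,z] s = b[y,z] s - b[x,z] s + b[x,y] s"
  by (simp add: cobdry_def face_def numeral_2_eq_2 atMost_Suc)
lemma cob1': "cobdry (Suc 0) b [x,y,z] s = b[y,z] s - b[x,z] s + b[x,y] s"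
  using cob1 by simp
lemma cob2: "cobdry 2 f [a,b,c,d] s = f[b,c,d] s - f[a,c,d] s + f[a,b,d] s - f[a,b,c] s"
  by (simp add: cobdry_def face_def numeral_3_eq_3 numeral_2_eq_2 atMost_Suc)
lemma tuples1: "xs \<in> tuples G 1 \<longleftrightarrow> (\<exists>x y. xs = [x,y] \<and> x \<in> carrier G \<and> y \<in> carrier G)"
  by (auto simp: tuples_def length_Suc_conv)
lemma tuples2: "xs \<in> tuples G 2 \<longleftrightarrow> (\<exists>x y z. xs = [x,y,z] \<and> x \<in> carrier G \<and> y \<in> carrier G \<and> z \<in> carrier G)"
  by (auto simp: tuples_def length_Suc_conv numeral_2_eq_2)
lemma tuples3: "xs \<in> tuples G 3 \<longleftrightarrow> (\<exists>x y z w. xs = [x,y,z,w] \<and> x \<in> carrier G \<and> y \<in> carrier G \<and> z \<in> carrier G \<and> w \<in> carrier G)"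
  by (auto simp: tuples_def length_Suc_conv numeral_3_eq_3)


lemma binv_add: "f \<in> binv_cochains G S act n \<Longrightarrow> g \<in> binv_cochains G S act n \<Longrightarrow>
   (\<lambda>xs s. f xs s + g xs s) \<in> binv_cochains G S act n"
proof -
  assume f: "f \<in> binv_cochains G S act n" and g: "g \<in> binv_cochains G S act n"
  obtain Cf where Cf: "\<forall>xs\<in>tuples G n. \<forall>s\<in>S. \<bar>f xs s\<bar> \<le> Cf" using f unfolding binv_cochains_def by blast
  obtain Cg where Cg: "\<forall>xs\<in>tuples G n. \<forall>s\<in>S. \<bar>g xs s\<bar> \<le> Cg" using g unfolding binv_cochains_def by blast
  have "\<forall>xs\<in>tuples G n. \<forall>s\<in>S. \<bar>f xs s + g xs s\<bar> \<le> Cf + Cg"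
  proof (intro ballI)
    fix xs s assume "xs \<in> tuples G n" "s \<in> S"
    then have "\<bar>f xs s\<bar> \<le> Cf" "\<bar>g xs s\<bar> \<le> Cg" using Cf Cg by auto
    then show "\<bar>f xs s + g xs s\<bar> \<le> Cf + Cg" by linarith
  qed
  then show ?thesis using f g unfolding binv_cochains_def by auto
qed

lemma binv_neg: "f \<in> binv_cochains G S act n \<Longrightarrow> (\<lambda>xs s. - f xs s) \<in> binv_cochains G S act n"
  unfolding binv_cochains_def by auto

lemma binv_zero: "(\<lambda>xs s. 0) \<in> binv_cochains G S act n"
  unfolding binv_cochains_def by auto

lemma cobdry_add: "cobdry n (\<lambda>xs s. f xs s + g xs s) xs s = cobdry n f xs s + cobdry n g xs s"
  by (simp add: cobdry_def sum.distrib distrib_left)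

lemma cobdry_neg: "cobdry n (\<lambda>xs s. - f xs s) xs s = - cobdry n f xs s"
  by (simp add: cobdry_def sum_negf)

lemma cobdry_zero: "cobdry n (\<lambda>xs s. 0) xs s = 0"
  by (simp add: cobdry_def)

lemma cob_add: "f \<in> bcoboundaries G S act n \<Longrightarrow> g \<in> bcoboundaries G S act n \<Longrightarrow>
   (\<lambda>xs s. f xs s + g xs s) \<in> bcoboundaries G S act n"
proof -
  assume "f \<in> bcoboundaries G S act n" "g \<in> bcoboundaries G S act n"
  then obtain b1 b2 where b1: "b1 \<in> binv_cochains G S act n" "\<forall>xs\<in>tuples G (Suc n). \<forall>s\<in>S. f xs s = cobdry n b1 xs s"
    and b2: "b2 \<in> binv_cochains G S act n" "\<forall>xs\<in>tuples G (Suc n). \<forall>s\<in>S. g xs s = cobdry n b2 xs s"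
    unfolding bcoboundaries_def by blast
  show ?thesis unfolding bcoboundaries_def mem_Collect_eq
    by (rule bexI[of _ "\<lambda>xs s. b1 xs s + b2 xs s"]) (use b1 b2 in \<open>auto simp: cobdry_add intro: binv_add\<close>)
qed

lemma cob_neg: "f \<in> bcoboundaries G S act n \<Longrightarrow> (\<lambda>xs s. - f xs s) \<in> bcoboundaries G S act n"
proof -
  assume "f \<in> bcoboundaries G S act n"
  then obtain b1 where b1: "b1 \<in> binv_cochains G S act n" "\<forall>xs\<in>tuples G (Suc n). \<forall>s\<in>S. f xs s = cobdry n b1 xs s"
    unfolding bcoboundaries_def by blast
  show ?thesis unfolding bcoboundaries_def mem_Collect_eq
    by (rule bexI[of _ "\<lambda>xs s. - b1 xs s"]) (use b1 in \<open>auto simp: cobdry_neg intro: binv_neg\<close>)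
qed

lemma cob_zero: "(\<lambda>xs s. 0) \<in> bcoboundaries G S act n"
  unfolding bcoboundaries_def mem_Collect_eq
  by (rule bexI[of _ "\<lambda>xs s. 0"]) (auto simp: cobdry_zero intro: binv_zero)

lemma cohrel_equiv: "equiv (bcocycles G S act (Suc n)) (cohrel G S act n)"
proof (rule equivI)
  show "cohrel G S act n \<subseteq> bcocycles G S act (Suc n) \<times> bcocycles G S act (Suc n)"
    unfolding cohrel_def by auto
  show "refl_on (bcocycles G S act (Suc n)) (cohrel G S act n)"
    unfolding refl_on_def cohrel_def using cob_zero by auto
  show "sym (cohrel G S act n)"
  proof (rule symI)
    fix f h assume "(f, h) \<in> cohrel G S act n"
    then have "f \<in> bcocycles G S act (Suc n)" "h \<in> bcocycles G S act (Suc n)"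
      "(\<lambda>xs s. f xs s - h xs s) \<in> bcoboundaries G S act n" unfolding cohrel_def by auto
    moreover from cob_neg[OF this(3)] have "(\<lambda>xs s. h xs s - f xs s) \<in> bcoboundaries G S act n" by simp
    ultimately show "(h, f) \<in> cohrel G S act n" unfolding cohrel_def by auto
  qed
  show "trans (cohrel G S act n)"
  proof (rule transI)
    fix f h k assume "(f, h) \<in> cohrel G S act n" "(h, k) \<in> cohrel G S act n"
    then have "f \<in> bcocycles G S act (Suc n)" "k \<in> bcocycles G S act (Suc n)"
      "(\<lambda>xs s. f xs s - h xs s) \<in> bcoboundaries G S act n"
      "(\<lambda>xs s. h xs s - k xs s) \<in> bcoboundaries G S act n" unfolding cohrel_def by auto
    moreover from cob_add[OF this(3,4)] have "(\<lambda>xs s. f xs s - k xs s) \<in> bcoboundaries G S act n" by simp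
    ultimately show "(f, k) \<in> cohrel G S act n" unfolding cohrel_def by auto
  qed
qed

lemma cocycle_diff: "f \<in> bcocycles G S act n \<Longrightarrow> g \<in> bcocycles G S act n \<Longrightarrow>
   (\<lambda>xs s. f xs s - g xs s) \<in> bcocycles G S act n"
proof -
  assume f: "f \<in> bcocycles G S act n" and g: "g \<in> bcocycles G S act n"
  have "(\<lambda>xs s. f xs s + (\<lambda>xs s. - g xs s) xs s) \<in> binv_cochains G S act n"
    using f g by (intro binv_add binv_neg) (auto simp: bcocycles_def)
  then have "(\<lambda>xs s. f xs s - g xs s) \<in> binv_cochains G S act n" by simp
  moreover have "cobdry n (\<lambda>xs s. f xs s - g xs s) xs s = cobdry n f xs s - cobdry n g xs s" for xs s
    by (simp add: cobdry_def sum_subtractf right_diff_distrib)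
  ultimately show ?thesis using f g unfolding bcocycles_def by auto
qed

locale setting =
  fixes G :: "('a,'m) monoid_scheme" and K :: "('b,'n) monoid_scheme"
    and \<phi> :: "'a \<Rightarrow> 'b" and S :: "'s set" and act :: "'b \<Rightarrow> 's \<Rightarrow> 's"
  assumes grpG: "group G" and grpK: "group K"
    and hom: "\<phi> \<in> hom G K" and surj: "\<phi> ` carrier G = carrier K"
    and ga: "group_action K S act"
begin

interpretation G: group G by (rule grpG)
interpretation K: group K by (rule grpK)
interpretation h: group_hom G K \<phi> by (simp add: group_hom_def group_hom_axioms_def grpG grpK hom)
interpretation A: group_action K S act by (rule ga)

lemma act_one: "s \<in> S \<Longrightarrow> act \<one>\<^bsub>K\<^esub> s = s"
  by (metis A.id_eq_one restrict_apply')

lemma act_closed: "g \<in> carrier K \<Longrightarrow> s \<in> S \<Longrightarrow> act g s \<in> S"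
  using A.element_image by blast

lemma core:
  assumes f: "f \<in> bcocycles K S act 2"
    and b: "b \<in> binv_cochains G S (\<lambda>\<gamma>. act (\<phi> \<gamma>)) 1"
    and eq: "\<forall>xs\<in>tuples G 2. \<forall>s\<in>S. res \<phi> f xs s = cobdry 1 b xs s"
  shows "f \<in> bcoboundaries K S act 1"
proof -
  obtain Cf where Cf: "\<And>xs s. xs \<in> tuples K 2 \<Longrightarrow> s \<in> S \<Longrightarrow> \<bar>f xs s\<bar> \<le> Cf"
    using f by (auto simp: bcocycles_def binv_cochains_def)
  have fK: "\<And>g xs s. g \<in> carrier K \<Longrightarrow> xs \<in> tuples K 2 \<Longrightarrow> s \<in> S \<Longrightarrow>
      f (map (\<lambda>x. g \<otimes>\<^bsub>K\<^esub> x) xs) s = f xs (act (inv\<^bsub>K\<^esub> g) s)"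
    using f by (auto simp: bcocycles_def binv_cochains_def)
  have fc: "\<And>xs s. xs \<in> tuples K 3 \<Longrightarrow> s \<in> S \<Longrightarrow> cobdry 2 f xs s = 0"
    using f by (auto simp: bcocycles_def numeral_3_eq_3 numeral_2_eq_2)
  obtain Cb where Cb: "\<And>xs s. xs \<in> tuples G 1 \<Longrightarrow> s \<in> S \<Longrightarrow> \<bar>b xs s\<bar> \<le> Cb"
    using b unfolding binv_cochains_def mem_Collect_eq by blast
  have bG: "\<And>g xs s. g \<in> carrier G \<Longrightarrow> xs \<in> tuples G 1 \<Longrightarrow> s \<in> S \<Longrightarrow>
      b (map (\<lambda>x. g \<otimes>\<^bsub>G\<^esub> x) xs) s = b xs (act (\<phi> (inv\<^bsub>G\<^esub> g)) s)"
    using b unfolding binv_cochains_def mem_Collect_eq by blast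
  have eq': "\<And>x y z s. x \<in> carrier G \<Longrightarrow> y \<in> carrier G \<Longrightarrow> z \<in> carrier G \<Longrightarrow> s \<in> S \<Longrightarrow>
      f [\<phi> x, \<phi> y, \<phi> z] s = b [y,z] s - b [x,z] s + b [x,y] s"
  proof -
    fix x y z s assume "x \<in> carrier G" "y \<in> carrier G" "z \<in> carrier G" "s \<in> S"
    then have "res \<phi> f [x,y,z] s = cobdry 1 b [x,y,z] s" using eq by (auto simp: tuples2)
    then show "f [\<phi> x, \<phi> y, \<phi> z] s = b [y,z] s - b [x,z] s + b [x,y] s"
      by (simp add: res_def cob1')
  qed
  have c3: "\<And>a b c d s. a \<in> carrier K \<Longrightarrow> b \<in> carrier K \<Longrightarrow> c \<in> carrier K \<Longrightarrow> d \<in> carrier K \<Longrightarrow> s \<in> S \<Longrightarrow>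
      f[b,c,d] s - f[a,c,d] s + f[a,b,d] s - f[a,b,c] s = 0"
    using fc by (metis cob2 tuples3)
  have F1: "\<And>k l s. k \<in> carrier K \<Longrightarrow> l \<in> carrier K \<Longrightarrow> s \<in> S \<Longrightarrow> f[k,k,l] s = f[k,k,k] s"
    using c3 by (metis diff_self add_0 diff_0 eq_diff_eq neg_equal_0_iff_equal)
  have F2: "\<And>k l s. k \<in> carrier K \<Longrightarrow> l \<in> carrier K \<Longrightarrow> s \<in> S \<Longrightarrow> f[k,l,l] s = f[l,l,l] s"
  proof -
    fix k l s assume "k \<in> carrier K" "l \<in> carrier K" "s \<in> S"
    from c3[OF this(1) this(2) this(2) this(2) this(3)] show "f[k,l,l] s = f[l,l,l] s" by simp
  qed
  have F3: "\<And>k s. k \<in> carrier K \<Longrightarrow> s \<in> S \<Longrightarrow> f[k,k,k] s = f[\<one>\<^bsub>K\<^esub>,\<one>\<^bsub>K\<^esub>,\<one>\<^bsub>K\<^esub>] (act (inv\<^bsub>K\<^esub> k) s)"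
  proof -
    fix k s assume k: "k \<in> carrier K" and s: "s \<in> S"
    have "[\<one>\<^bsub>K\<^esub>,\<one>\<^bsub>K\<^esub>,\<one>\<^bsub>K\<^esub>] \<in> tuples K 2" by (simp add: tuples_def)
    from fK[OF k this s] k show "f[k,k,k] s = f[\<one>\<^bsub>K\<^esub>,\<one>\<^bsub>K\<^esub>,\<one>\<^bsub>K\<^esub>] (act (inv\<^bsub>K\<^esub> k) s)" by simp
  qed
  have A0: "b [\<one>\<^bsub>G\<^esub>, n] t = f[\<one>\<^bsub>K\<^esub>,\<one>\<^bsub>K\<^esub>,\<one>\<^bsub>K\<^esub>] t"
    if n: "n \<in> carrier G" and n1: "\<phi> n = \<one>\<^bsub>K\<^esub>" and t: "t \<in> S" for n t
  proof -
    define E1 where "E1 = f[\<one>\<^bsub>K\<^esub>,\<one>\<^bsub>K\<^esub>,\<one>\<^bsub>K\<^esub>] t"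
    define d where "d = b [\<one>\<^bsub>G\<^esub>, n] t - E1"
    have rec: "b [\<one>\<^bsub>G\<^esub>, n [^]\<^bsub>G\<^esub> j] t - E1 = real j * d" for j :: nat
    proof (induction j)
      case 0
      have "f [\<phi> \<one>\<^bsub>G\<^esub>, \<phi> \<one>\<^bsub>G\<^esub>, \<phi> \<one>\<^bsub>G\<^esub>] t = b [\<one>\<^bsub>G\<^esub>,\<one>\<^bsub>G\<^esub>] t - b [\<one>\<^bsub>G\<^esub>,\<one>\<^bsub>G\<^esub>] t + b [\<one>\<^bsub>G\<^esub>,\<one>\<^bsub>G\<^esub>] t"
        using eq'[of "\<one>\<^bsub>G\<^esub>" "\<one>\<^bsub>G\<^esub>" "\<one>\<^bsub>G\<^esub>" t] t by simp
      then show ?case by (simp add: E1_def)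
    next
      case (Suc j)
      define m where "m = n [^]\<^bsub>G\<^esub> j"
      have m: "m \<in> carrier G" using n by (simp add: m_def)
      have m1: "\<phi> m = \<one>\<^bsub>K\<^esub>" using n n1 by (simp add: m_def h.hom_nat_pow)
      have mn: "n [^]\<^bsub>G\<^esub> Suc j = m \<otimes>\<^bsub>G\<^esub> n" by (simp add: m_def G.nat_pow_Suc)
      have mnc: "m \<otimes>\<^bsub>G\<^esub> n \<in> carrier G" using m n by simp
      have "f [\<phi> \<one>\<^bsub>G\<^esub>, \<phi> m, \<phi> (m \<otimes>\<^bsub>G\<^esub> n)] t = b [m, m \<otimes>\<^bsub>G\<^esub> n] t - b [\<one>\<^bsub>G\<^esub>, m \<otimes>\<^bsub>G\<^esub> n] t + b [\<one>\<^bsub>G\<^esub>, m] t"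
        using eq'[of "\<one>\<^bsub>G\<^esub>" m "m \<otimes>\<^bsub>G\<^esub> n" t] m mnc t by simp
      moreover have "f [\<phi> \<one>\<^bsub>G\<^esub>, \<phi> m, \<phi> (m \<otimes>\<^bsub>G\<^esub> n)] t = E1"
        using m n m1 n1 by (simp add: E1_def)
      moreover have "b [m, m \<otimes>\<^bsub>G\<^esub> n] t = b [\<one>\<^bsub>G\<^esub>, n] t"
      proof -
        have "[\<one>\<^bsub>G\<^esub>, n] \<in> tuples G 1" using n by (simp add: tuples_def)
        from bG[OF m this t] have "b [m \<otimes>\<^bsub>G\<^esub> \<one>\<^bsub>G\<^esub>, m \<otimes>\<^bsub>G\<^esub> n] t = b [\<one>\<^bsub>G\<^esub>, n] (act (\<phi> (inv\<^bsub>G\<^esub> m)) t)" by simp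
        moreover have "\<phi> (inv\<^bsub>G\<^esub> m) = \<one>\<^bsub>K\<^esub>" using m m1 by (simp add: h.hom_inv)
        ultimately show ?thesis using m t act_one by simp
      qed
      ultimately show ?case using Suc.IH mn by (simp add: d_def m_def algebra_simps)
    qed
    have bnd: "\<bar>real j * d\<bar> \<le> Cb + Cf" for j :: nat
    proof -
      have "n [^]\<^bsub>G\<^esub> j \<in> carrier G" using n by simp
      then have "[\<one>\<^bsub>G\<^esub>, n [^]\<^bsub>G\<^esub> j] \<in> tuples G 1" by (simp add: tuples_def)
      then have "\<bar>b [\<one>\<^bsub>G\<^esub>, n [^]\<^bsub>G\<^esub> j] t\<bar> \<le> Cb" using Cb t by blast
      moreover have "\<bar>E1\<bar> \<le> Cf" unfolding E1_def using Cf t by (simp add: tuples_def)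
      ultimately show ?thesis using rec[of j] by linarith
    qed
    have "d = 0"
    proof (rule ccontr)
      assume "d \<noteq> 0"
      then have "\<bar>d\<bar> > 0" by simp
      then obtain j :: nat where "Cb + Cf < real j * \<bar>d\<bar>" using ex_less_of_nat_mult by blast
      with bnd[of j] show False by (simp add: abs_mult)
    qed
    then show ?thesis by (simp add: d_def E1_def)
  qed
  have A: "b [x, x'] s = f[\<phi> x, \<phi> x, \<phi> x] s"
    if x: "x \<in> carrier G" and x': "x' \<in> carrier G" and xx: "\<phi> x = \<phi> x'" and s: "s \<in> S" for x x' s
  proof -
    define n where "n = inv\<^bsub>G\<^esub> x \<otimes>\<^bsub>G\<^esub> x'"
    have n: "n \<in> carrier G" using x x' by (simp add: n_def)
    have n1: "\<phi> n = \<one>\<^bsub>K\<^esub>" using x x' xx by (simp add: n_def h.hom_inv)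
    have xn: "x \<otimes>\<^bsub>G\<^esub> n = x'" using x x' by (simp add: n_def G.m_assoc[symmetric])
    define t where "t = act (\<phi> (inv\<^bsub>G\<^esub> x)) s"
    have t: "t \<in> S" using x s by (simp add: t_def act_closed)
    have "[\<one>\<^bsub>G\<^esub>, n] \<in> tuples G 1" using n by (simp add: tuples_def)
    from bG[OF x this s] have "b [x \<otimes>\<^bsub>G\<^esub> \<one>\<^bsub>G\<^esub>, x \<otimes>\<^bsub>G\<^esub> n] s = b [\<one>\<^bsub>G\<^esub>, n] t"
      by (simp add: t_def)
    then have "b [x, x'] s = b [\<one>\<^bsub>G\<^esub>, n] t" using x xn by simp
    also have "\<dots> = f[\<one>\<^bsub>K\<^esub>,\<one>\<^bsub>K\<^esub>,\<one>\<^bsub>K\<^esub>] t" using A0 n n1 t by blast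
    also have "\<dots> = f[\<phi> x, \<phi> x, \<phi> x] s" using F3[of "\<phi> x" s] x s by (simp add: t_def h.hom_inv)
    finally show ?thesis .
  qed
  have B1: "b [x', z] s = b [x, z] s"
    if x: "x \<in> carrier G" and x': "x' \<in> carrier G" and z: "z \<in> carrier G" and xx: "\<phi> x = \<phi> x'" and s: "s \<in> S" for x x' z s
  proof -
    have "f [\<phi> x, \<phi> x', \<phi> z] s = b [x',z] s - b [x,z] s + b [x,x'] s" using eq' x x' z s by blast
    moreover have "f [\<phi> x, \<phi> x', \<phi> z] s = f[\<phi> x, \<phi> x, \<phi> x] s" using F1[of "\<phi> x" "\<phi> z" s] x x' z s xx by simp
    moreover have "b [x,x'] s = f[\<phi> x, \<phi> x, \<phi> x] s" using A x x' xx s by blast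
    ultimately show ?thesis by linarith
  qed
  have B2: "b [x, z'] s = b [x, z] s"
    if x: "x \<in> carrier G" and z': "z' \<in> carrier G" and z: "z \<in> carrier G" and zz: "\<phi> z = \<phi> z'" and s: "s \<in> S" for x z z' s
  proof -
    have "f [\<phi> x, \<phi> z, \<phi> z'] s = b [z,z'] s - b [x,z'] s + b [x,z] s" using eq' x z' z s by blast
    moreover have "f [\<phi> x, \<phi> z, \<phi> z'] s = f[\<phi> z, \<phi> z, \<phi> z] s" using F2[of "\<phi> x" "\<phi> z" s] x z z' s zz by simp
    moreover have "b [z,z'] s = f[\<phi> z, \<phi> z, \<phi> z] s" using A z z' zz s by blast
    ultimately show ?thesis by linarith
  qed
  have B: "b [x, z] s = b [x', z'] s"
    if "x \<in> carrier G" "x' \<in> carrier G" "z \<in> carrier G" "z' \<in> carrier G" "\<phi> x = \<phi> x'" "\<phi> z = \<phi> z'" "s \<in> S"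
    for x x' z z' s
  proof -
    have "b [x', z] s = b [x, z] s" using B1[of x x' z s] that by blast
    moreover have "b [x', z'] s = b [x', z] s" using B2[of x' z' z s] that by blast
    ultimately show ?thesis by simp
  qed
  define \<sigma> where "\<sigma> = (\<lambda>k. inv_into (carrier G) \<phi> k)"
  have sig: "\<sigma> k \<in> carrier G" "\<phi> (\<sigma> k) = k" if "k \<in> carrier K" for k
    using that surj unfolding \<sigma>_def by (auto intro: inv_into_into f_inv_into_f)
  define c where "c = (\<lambda>xs s. b (map \<sigma> xs) s)"
  have cbinv: "c \<in> binv_cochains K S act 1"
    unfolding binv_cochains_def mem_Collect_eq
  proof (intro conjI ballI)
    show "\<exists>C. \<forall>xs\<in>tuples K 1. \<forall>s\<in>S. \<bar>c xs s\<bar> \<le> C"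
    proof (intro exI ballI)
      fix xs s assume xs: "xs \<in> tuples K 1" and s: "s \<in> S"
      then have "map \<sigma> xs \<in> tuples G 1" using sig(1) by (force simp: tuples_def)
      then show "\<bar>c xs s\<bar> \<le> Cb" using Cb s by (simp add: c_def)
    qed
  next
    fix g xs s assume g: "g \<in> carrier K" and xs: "xs \<in> tuples K 1" and s: "s \<in> S"
    obtain k l where kl: "xs = [k,l]" "k \<in> carrier K" "l \<in> carrier K" using xs[unfolded tuples1] by blast
    have "c (map (\<lambda>x. g \<otimes>\<^bsub>K\<^esub> x) xs) s = b [\<sigma> (g \<otimes>\<^bsub>K\<^esub> k), \<sigma> (g \<otimes>\<^bsub>K\<^esub> l)] s"
      by (simp add: c_def kl)
    also have "\<dots> = b [\<sigma> g \<otimes>\<^bsub>G\<^esub> \<sigma> k, \<sigma> g \<otimes>\<^bsub>G\<^esub> \<sigma> l] s"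
      using B[of "\<sigma> (g \<otimes>\<^bsub>K\<^esub> k)" "\<sigma> g \<otimes>\<^bsub>G\<^esub> \<sigma> k" "\<sigma> (g \<otimes>\<^bsub>K\<^esub> l)" "\<sigma> g \<otimes>\<^bsub>G\<^esub> \<sigma> l" s]
        sig g kl s by simp
    also have "\<dots> = b [\<sigma> k, \<sigma> l] (act (\<phi> (inv\<^bsub>G\<^esub> \<sigma> g)) s)"
      using bG[of "\<sigma> g" "[\<sigma> k, \<sigma> l]" s] sig g kl s by (simp add: tuples_def)
    also have "\<dots> = c xs (act (inv\<^bsub>K\<^esub> g) s)"
      using sig g by (simp add: c_def kl h.hom_inv)
    finally show "c (map (\<lambda>x. g \<otimes>\<^bsub>K\<^esub> x) xs) s = c xs (act (inv\<^bsub>K\<^esub> g) s)" .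
  qed
  show ?thesis
    unfolding bcoboundaries_def mem_Collect_eq
  proof (intro bexI[OF _ cbinv] ballI)
    fix xs s assume xs: "xs \<in> tuples K (Suc 1)" and s: "s \<in> S"
    obtain k l m where klm: "xs = [k,l,m]" "k \<in> carrier K" "l \<in> carrier K" "m \<in> carrier K"
      using xs[unfolded Suc_1 tuples2] by blast
    have "f xs s = f [\<phi> (\<sigma> k), \<phi> (\<sigma> l), \<phi> (\<sigma> m)] s" using sig klm by simp
    also have "\<dots> = cobdry 1 c xs s" using eq'[of "\<sigma> k" "\<sigma> l" "\<sigma> m" s] sig klm s
      by (simp add: cob1' c_def)
    finally show "f xs s = cobdry 1 c xs s" .
  qed
qed

lemma face_map: "face i (map g xs) = map g (face i xs)"
  by (simp add: face_def take_map drop_map)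

lemma tuples_map: "xs \<in> tuples G m \<Longrightarrow> map \<phi> xs \<in> tuples K m"
  by (auto simp: tuples_def)

lemma res_cocycle:
  assumes f: "f \<in> bcocycles K S act m"
  shows "res \<phi> f \<in> bcocycles G S (\<lambda>\<gamma>. act (\<phi> \<gamma>)) m"
proof -
  obtain C where C: "\<forall>xs\<in>tuples K m. \<forall>s\<in>S. \<bar>f xs s\<bar> \<le> C"
    using f unfolding bcocycles_def binv_cochains_def by blast
  have inv: "\<forall>g\<in>carrier K. \<forall>xs\<in>tuples K m. \<forall>s\<in>S. f (map (\<lambda>x. g \<otimes>\<^bsub>K\<^esub> x) xs) s = f xs (act (inv\<^bsub>K\<^esub> g) s)"
    using f unfolding bcocycles_def binv_cochains_def by blast
  have cc: "\<forall>xs\<in>tuples K (Suc m). \<forall>s\<in>S. cobdry m f xs s = 0"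
    using f unfolding bcocycles_def by blast
  have "\<forall>xs\<in>tuples G m. \<forall>s\<in>S. \<bar>res \<phi> f xs s\<bar> \<le> C"
    using C tuples_map by (simp add: res_def)
  moreover have "\<forall>g\<in>carrier G. \<forall>xs\<in>tuples G m. \<forall>s\<in>S.
      res \<phi> f (map (\<lambda>x. g \<otimes>\<^bsub>G\<^esub> x) xs) s = res \<phi> f xs (act (\<phi> (inv\<^bsub>G\<^esub> g)) s)"
  proof (intro ballI)
    fix g xs s assume g: "g \<in> carrier G" and xs: "xs \<in> tuples G m" and s: "s \<in> S"
    have "map \<phi> (map (\<lambda>x. g \<otimes>\<^bsub>G\<^esub> x) xs) = map (\<lambda>x. \<phi> g \<otimes>\<^bsub>K\<^esub> x) (map \<phi> xs)"
      using g xs by (auto simp: tuples_def)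
    moreover have "f (map (\<lambda>x. \<phi> g \<otimes>\<^bsub>K\<^esub> x) (map \<phi> xs)) s = f (map \<phi> xs) (act (inv\<^bsub>K\<^esub> \<phi> g) s)"
      using inv g tuples_map[OF xs] s by (meson h.hom_closed)
    ultimately show "res \<phi> f (map (\<lambda>x. g \<otimes>\<^bsub>G\<^esub> x) xs) s = res \<phi> f xs (act (\<phi> (inv\<^bsub>G\<^esub> g)) s)"
      using g unfolding res_def by (simp only: h.hom_inv)
  qed
  moreover have "\<forall>xs\<in>tuples G (Suc m). \<forall>s\<in>S. cobdry m (res \<phi> f) xs s = 0"
  proof (intro ballI)
    fix xs s assume xs: "xs \<in> tuples G (Suc m)" and s: "s \<in> S"
    have "cobdry m (res \<phi> f) xs s = cobdry m f (map \<phi> xs) s"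
      by (simp add: cobdry_def res_def face_map)
    then show "cobdry m (res \<phi> f) xs s = 0" using cc tuples_map[OF xs] s by simp
  qed
  ultimately show ?thesis unfolding bcocycles_def binv_cochains_def by blast
qed

lemma main: "inj_on (Hres G S act \<phi> 1) (Hb K S act 1)"
proof (rule inj_onI)
  fix C1 C2 assume C1: "C1 \<in> Hb K S act 1" and C2: "C2 \<in> Hb K S act 1"
    and eqH: "Hres G S act \<phi> 1 C1 = Hres G S act \<phi> 1 C2"
  have EK: "equiv (bcocycles K S act (Suc 1)) (cohrel K S act 1)" by (rule cohrel_equiv)
  have EG: "equiv (bcocycles G S (\<lambda>\<gamma>. act (\<phi> \<gamma>)) (Suc 1)) (cohrel G S (\<lambda>\<gamma>. act (\<phi> \<gamma>)) 1)" by (rule cohrel_equiv)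
  obtain f1 where f1: "f1 \<in> bcocycles K S act (Suc 1)" "C1 = cohrel K S act 1 `` {f1}"
    using C1 unfolding Hb_def by (auto elim: quotientE)
  obtain f2 where f2: "f2 \<in> bcocycles K S act (Suc 1)" "C2 = cohrel K S act 1 `` {f2}"
    using C2 unfolding Hb_def by (auto elim: quotientE)
  have f1C1: "f1 \<in> C1" using equiv_class_self[OF EK f1(1)] f1(2) by simp
  have rf1: "res \<phi> f1 \<in> bcocycles G S (\<lambda>\<gamma>. act (\<phi> \<gamma>)) (Suc 1)" using res_cocycle f1(1) by blast
  have "res \<phi> f1 \<in> Hres G S act \<phi> 1 C1"
    unfolding Hres_def using f1C1 equiv_class_self[OF EG rf1] by blast
  then have "res \<phi> f1 \<in> Hres G S act \<phi> 1 C2" using eqH by simp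
  then obtain c where c: "c \<in> C2" and rc: "(res \<phi> c, res \<phi> f1) \<in> cohrel G S (\<lambda>\<gamma>. act (\<phi> \<gamma>)) 1"
    unfolding Hres_def by blast
  have f2c: "(f2, c) \<in> cohrel K S act 1" using c f2 by simp
  then have cc: "c \<in> bcocycles K S act (Suc 1)" unfolding cohrel_def by blast
  from rc obtain b where b: "b \<in> binv_cochains G S (\<lambda>\<gamma>. act (\<phi> \<gamma>)) 1"
    and beq: "\<forall>xs\<in>tuples G (Suc 1). \<forall>s\<in>S. res \<phi> c xs s - res \<phi> f1 xs s = cobdry 1 b xs s"
    unfolding cohrel_def bcoboundaries_def by blast
  define d where "d = (\<lambda>xs s. f1 xs s - c xs s)"
  have dc: "d \<in> bcocycles K S act 2" unfolding d_def using cocycle_diff[OF f1(1) cc] by (simp add: numeral_2_eq_2)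
  have "\<forall>xs\<in>tuples G 2. \<forall>s\<in>S. res \<phi> d xs s = cobdry 1 (\<lambda>xs s. - b xs s) xs s"
    using beq by (simp add: d_def res_def cobdry_neg numeral_2_eq_2 algebra_simps)
  from core[OF dc binv_neg[OF b] this] have "d \<in> bcoboundaries K S act 1" .
  then have "(f1, c) \<in> cohrel K S act 1" using f1(1) cc unfolding cohrel_def d_def by auto
  then have "(f1, f2) \<in> cohrel K S act 1"
    using f2c EK unfolding equiv_def by (meson symD transD)
  then show "C1 = C2" using f1 f2 EK by (simp add: equiv_class_eq)
qed

end

theorem mainTheorem11:
  fixes \<Gamma> :: "('a,'m) monoid_scheme" and K :: "('b,'n) monoid_scheme"
    and \<phi> :: "'a \<Rightarrow> 'b" and S :: "'s set" and act :: "'b \<Rightarrow> 's \<Rightarrow> 's"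
  assumes "group \<Gamma>" and "group K"
    and "\<phi> \<in> hom \<Gamma> K" and "\<phi> ` carrier \<Gamma> = carrier K"
    and "group_action K S act"
  shows "inj_on (Hres \<Gamma> S act \<phi> 1) (Hb K S act 1)"
proof -
  interpret setting \<Gamma> K \<phi> S act using assms by (rule setting.intro)
  show ?thesis by (rule main)
qed

end
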